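(* In the setting of the context, for every $N$-tuple of integers $\mathbf{x}=(x_1,\dots,x_N)$ with $0\le x_p\le \ell_p$, define \[ V(\mathbf{x})=\sum_{\mathbf{n}=\mathbf{x}}^{\boldsymbol{\ell}}\mathscr{C}_{\mathbf{n},\mathbf{x}}V^{\mathbf{n}},\qquad \mathscr{C}_{\mathbf{n},\mathbf{x}}=\frac{(-1)^{|\mathbf{n}|-|\mathbf{x}|}}{(2|\mathbf{x}|+\omega+1)_{|\mathbf{n}|-|\mathbf{x}|}}\prod_{p=1}^N\binom{n_p}{x_p}\big(|\mathbf{n}|_1^{p-1}+|\mathbf{x}|_1^{p}+|\boldsymbol{\ell}|_p^N+a_p+\omega+1\big)_{n_p-x_p}, \] where $\sum_{\mathbf{n}=\mathbf{x}}^{\boldsymbol{\ell}}$ denotes the sum over all $\mathbf{n}$ with $x_p\le n_p\le\ell_p$ for every $p$. Then $A\,V(\mathbf{x})=\theta_{|\mathbf{x}|}V(\mathbf{x})$.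
   Context: Notation: for $N$-tuples $\mathbf{n}=(n_1,\dots,n_N)$ of integers, $|\mathbf{n}|_j^k=\sum_{p=j}^k n_p$ (equal to $0$ if $j>k$), $|\mathbf{n}|=|\mathbf{n}|_1^N$, $\mathbf{e}_p$ is the $p$-th unit $N$-tuple, and tuples are added componentwise. $(x)_k=x(x+1)\cdots(x+k-1)$, $(x)_0=1$. Setting: $N\ge1$, $\boldsymbol{\ell}=(\ell_1,\dots,\ell_N)$ nonnegative integers, $\mathcal{V}=\mathbb{C}^{\ell_1+1}\otimes\cdots\otimes\mathbb{C}^{\ell_N+1}$ with basis $V^{\mathbf{n}}$, $0\le n_p\le\ell_p$; $V^{\mathbf{n}}=0$ if some $n_p<0$ or $n_p>\ell_p$. Fix scalars $\theta_0,\theta_0^\star,h,h^\star,\omega,\omega^\star,a_1,\dots,a_N\in\mathbb{C}$; $\theta_i=\theta_0+hi(i+\omega)$, $\theta^\star_i=\theta^\star_0+h^\star i(i+\omega^\star)$. For $p=1,\dots,N$: $\xi_{\mathbf{n},p}=h(|\mathbf{n}|_1^{p-1}+|\mathbf{n}|_1^p+|\boldsymbol{\ell}|_p^N+a_p+\omega)n_p$, $\xi^\star_{\mathbf{n},p}=h^\star(|\mathbf{n}|_1^{p-1}+|\mathbf{n}|_1^p+|\boldsymbol{\ell}|_{p+1}^N-a_p+\omega^\star)(n_p-\ell_p)$. The operators are $A V^{\mathbf{n}}=\theta_{|\mathbf{n}|}V^{\mathbf{n}}+\sum_{p=1}^N\xi_{\mathbf{n}+\mathbf{e}_p,p}V^{\mathbf{n}+\mathbf{e}_p}$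 and $A^\star V^{\mathbf{n}}=\theta^\star_{|\mathbf{n}|}V^{\mathbf{n}}+\sum_{p=1}^N\xi^\star_{\mathbf{n}-\mathbf{e}_p,p}V^{\mathbf{n}-\mathbf{e}_p}$. Standing constraints: $h,h^\star\neq0$; $\omega,\omega^\star\notin\{-2|\boldsymbol{\ell}|+1,\dots,-1\}$; for each $i$, none of $a_i,\ a_i+\omega-\omega^\star,\ a_i-|\boldsymbol{\ell}|-\omega^\star,\ a_i+|\boldsymbol{\ell}|+\omega$ lies in $\{-\ell_i,\dots,-1\}$; and with $S^\pm(\ell,a)=\{\pm(a+k+\tfrac12(\omega-\omega^\star)):k=1,\dots,\ell\}$, for all $i,j$ and signs $\epsilon_i,\epsilon_j$, $S^{\epsilon_i}(\ell_i,a_i)$ and $S^{\epsilon_j}(\ell_j,a_j)$ are in general position (one contains the other or their union is not a string). *)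

theory Defs
  imports Complex_Main
begin

text \<open>N-tuples are lists of natural numbers of length N; position p (1-based) is
  the list entry at index p-1.  Vectors of the space V are coefficient functions
  nat list => complex supported on the box of index tuples.\<close>

definition tsum :: "nat list \<Rightarrow> nat \<Rightarrow> nat \<Rightarrow> nat" where
  "tsum n j k = (\<Sum>p\<in>{j..k}. n ! (p - 1))"

definition tot :: "nat list \<Rightarrow> nat" where
  "tot n = tsum n 1 (length n)"

definition box :: "nat list \<Rightarrow> nat list set" where
  "box l = {n. length n = length l \<and> (\<forall>i<length l. n ! i \<le> l ! i)}"

definition basisV :: "nat list \<Rightarrow> nat list \<Rightarrow> nat list \<Rightarrow> complex" where
  "basisV l n = (\<lambda>m. if m = n \<and> n \<in> box l then 1 else 0)"

definition unitadd :: "nat list \<Rightarrow> nat \<Rightarrow> nat list" where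
  "unitadd n p = n[p - 1 := n ! (p - 1) + 1]"

definition theta :: "complex \<Rightarrow> complex \<Rightarrow> complex \<Rightarrow> nat \<Rightarrow> complex" where
  "theta \<theta>0 h \<omega> i = \<theta>0 + h * of_nat i * (of_nat i + \<omega>)"

definition xi :: "complex \<Rightarrow> complex \<Rightarrow> complex list \<Rightarrow> nat list \<Rightarrow> nat list \<Rightarrow> nat \<Rightarrow> complex" where
  "xi h \<omega> a l n p = h * (of_nat (tsum n 1 (p - 1)) + of_nat (tsum n 1 p)
      + of_nat (tsum l p (length l)) + a ! (p - 1) + \<omega>) * of_nat (n ! (p - 1))"

definition A_basis :: "complex \<Rightarrow> complex \<Rightarrow> complex \<Rightarrow> complex list \<Rightarrow> nat list \<Rightarrow> nat list
    \<Rightarrow> nat list \<Rightarrow> complex" where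
  "A_basis \<theta>0 h \<omega> a l n = (\<lambda>m. theta \<theta>0 h \<omega> (tot n) * basisV l n m
     + (\<Sum>p\<in>{1..length l}. xi h \<omega> a l (unitadd n p) p * basisV l (unitadd n p) m))"

definition opA :: "complex \<Rightarrow> complex \<Rightarrow> complex \<Rightarrow> complex list \<Rightarrow> nat list
    \<Rightarrow> (nat list \<Rightarrow> complex) \<Rightarrow> nat list \<Rightarrow> complex" where
  "opA \<theta>0 h \<omega> a l v = (\<lambda>m. \<Sum>n\<in>box l. v n * A_basis \<theta>0 h \<omega> a l n m)"

definition coefC :: "complex \<Rightarrow> complex list \<Rightarrow> nat list \<Rightarrow> nat list \<Rightarrow> nat list \<Rightarrow> complex" where
  "coefC \<omega> a l n x =
     (-1) ^ (tot n - tot x) / pochhammer (2 * of_nat (tot x) + \<omega> + 1) (tot n - tot x)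
     * (\<Prod>p\<in>{1..length l}. of_nat ((n ! (p - 1)) choose (x ! (p - 1)))
         * pochhammer (of_nat (tsum n 1 (p - 1)) + of_nat (tsum x 1 p)
              + of_nat (tsum l p (length l)) + a ! (p - 1) + \<omega> + 1)
             (n ! (p - 1) - x ! (p - 1)))"

definition Vx :: "complex \<Rightarrow> complex list \<Rightarrow> nat list \<Rightarrow> nat list \<Rightarrow> nat list \<Rightarrow> complex" where
  "Vx \<omega> a l x = (\<lambda>m. \<Sum>n\<in>{n\<in>box l. \<forall>i<length l. x ! i \<le> n ! i}.
        coefC \<omega> a l n x * basisV l n m)"

definition negrange :: "int \<Rightarrow> complex set" where
  "negrange k = {of_int j | j. - k \<le> j \<and> j \<le> -1}"

definition Sset :: "int \<Rightarrow> nat \<Rightarrow> complex \<Rightarrow> complex \<Rightarrow> complex \<Rightarrow> complex set" where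
  "Sset \<epsilon> m b \<omega> \<omega>s = {of_int \<epsilon> * (b + of_nat k + (\<omega> - \<omega>s) / 2) | k. 1 \<le> k \<and> k \<le> m}"

definition is_string :: "complex set \<Rightarrow> bool" where
  "is_string T = (\<exists>c m. T = {c + of_nat k | k. k \<le> m})"

definition general_position :: "complex set \<Rightarrow> complex set \<Rightarrow> bool" where
  "general_position S T = (S \<subseteq> T \<or> T \<subseteq> S \<or> \<not> is_string (S \<union> T))"

definition standing :: "nat list \<Rightarrow> complex \<Rightarrow> complex \<Rightarrow> complex \<Rightarrow> complex \<Rightarrow> complex list \<Rightarrow> bool" where
  "standing l h hs \<omega> \<omega>s a =
    (length l \<ge> 1 \<and> length a = length l \<and> h \<noteq> 0 \<and> hs \<noteq> 0 \<and>
     \<omega> \<notin> negrange (2 * int (tot l) - 1) \<and> \<omega>s \<notin> negrange (2 * int (tot l) - 1) \<and>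
     (\<forall>i<length l.
        a ! i \<notin> negrange (int (l ! i)) \<and>
        a ! i + \<omega> - \<omega>s \<notin> negrange (int (l ! i)) \<and>
        a ! i - of_nat (tot l) - \<omega>s \<notin> negrange (int (l ! i)) \<and>
        a ! i + of_nat (tot l) + \<omega> \<notin> negrange (int (l ! i))) \<and>
     (\<forall>i<length l. \<forall>j<length l. \<forall>\<epsilon>i\<in>{1,-1}. \<forall>\<epsilon>j\<in>{1,-1}.
        general_position (Sset \<epsilon>i (l ! i) (a ! i) \<omega> \<omega>s) (Sset \<epsilon>j (l ! j) (a ! j) \<omega> \<omega>s)))"

end

theory Submission imports Defs begin

lemma tsum_0: "tsum n 1 0 = 0" "tsum n (Suc 0) 0 = 0" by (simp_all add: tsum_def)
lemma tsum_Suc: "tsum n (Suc 0) (Suc j) = tsum n (Suc 0) j + n ! j"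
  by (simp add: tsum_def sum.cl_ivl_Suc)
lemma tsum_prev: "1 \<le> p \<Longrightarrow> tsum n (Suc 0) p = tsum n (Suc 0) (p - 1) + n ! (p - 1)"
  using tsum_Suc[of n "p - 1"] by simp

lemma tsum_mono: "(\<And>i. i < j \<Longrightarrow> x ! i \<le> m ! i) \<Longrightarrow> tsum x 1 j \<le> tsum m 1 j"
  by (induction j) (auto simp: tsum_0 tsum_Suc add_mono)

definition dec :: "nat list \<Rightarrow> nat \<Rightarrow> nat list" where
  "dec m p = m[p - 1 := m ! (p - 1) - 1]"

lemma tsum_dec:
  assumes "1 \<le> p" "p \<le> length m" "1 \<le> m ! (p - 1)"
  shows "(of_nat (tsum (dec m p) 1 j) :: complex) = of_nat (tsum m 1 j) - (if p \<le> j then 1 else 0)"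
proof (induction j)
  case 0 then show ?case using assms by (simp add: tsum_0)
next
  case (Suc j)
  have nth: "dec m p ! j = (if j = p - 1 then m ! j - 1 else m ! j)"
    using assms by (simp add: dec_def nth_list_update)
  have e1: "tsum (dec m p) (Suc 0) (Suc j) = tsum (dec m p) (Suc 0) j + dec m p ! j"
    and e2: "tsum m (Suc 0) (Suc j) = tsum m (Suc 0) j + m ! j" by (rule tsum_Suc)+
  show ?case
  proof (cases "j = p - 1")
    case True
    then have "\<not> p \<le> j" "p \<le> Suc j" "dec m p ! j = m ! j - 1" "1 \<le> m ! j" using assms nth by auto
    then show ?thesis using Suc e1 e2 by (simp add: of_nat_diff)
  next
    case False
    then have "(p \<le> Suc j) = (p \<le> j)" "dec m p ! j = m ! j" using assms nth by auto
    then show ?thesis using Suc e1 e2 by simp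
  qed
qed

lemma length_dec[simp]: "length (dec m p) = length m" by (simp add: dec_def)

lemma nth_dec: "1 \<le> p \<Longrightarrow> p \<le> length m \<Longrightarrow> dec m p ! i = (if i = p - 1 then m ! i - 1 else m ! i)"
  by (simp add: dec_def nth_list_update)

lemma unitadd_eq_iff:
  assumes "1 \<le> p" "p \<le> length m" "length n = length m"
  shows "(unitadd n p = m) \<longleftrightarrow> (n = dec m p \<and> 1 \<le> m ! (p - 1))"
proof
  assume u: "unitadd n p = m"
  have i: "p - 1 < length n" using assms by simp
  have "m ! (p - 1) = unitadd n p ! (p - 1)" using u by simp
  also have "\<dots> = n ! (p - 1) + 1" unfolding unitadd_def using i by simp
  finally have "n ! (p - 1) + 1 = m ! (p - 1)" by simp
  moreover have "dec (unitadd n p) p = n" unfolding unitadd_def dec_def using i by simp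
  then have "n = dec m p" using u by simp
  ultimately show "n = dec m p \<and> 1 \<le> m ! (p - 1)" by auto
next
  assume "n = dec m p \<and> 1 \<le> m ! (p - 1)"
  then have n: "n = dec m p" and m1: "1 \<le> m ! (p - 1)" by auto
  have i: "p - 1 < length m" using assms by simp
  show "unitadd n p = m" unfolding n unitadd_def dec_def using i m1 by simp
qed

lemma finite_box: "finite (box l)"
proof -
  have "box l \<subseteq> {n. set n \<subseteq> {0..sum_list l} \<and> length n = length l}"
    unfolding box_def
    by (auto simp: in_set_conv_nth) (meson elem_le_sum_list order.trans)
  then show ?thesis by (rule finite_subset) (simp add: finite_lists_length_eq)
qed


definition Sx :: "nat list \<Rightarrow> nat list \<Rightarrow> nat list set" where
  "Sx l x = {n\<in>box l. \<forall>i<length l. x ! i \<le> n ! i}"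

lemma finite_Sx: "finite (Sx l x)" unfolding Sx_def using finite_box by auto

lemma Sx_box: "n \<in> Sx l x \<Longrightarrow> n \<in> box l" by (simp add: Sx_def)

lemma Vx_eval: "Vx \<omega> a l x n = (if n \<in> Sx l x then coefC \<omega> a l n x else 0)"
proof -
  have "Vx \<omega> a l x n = (\<Sum>k\<in>Sx l x. if n = k then coefC \<omega> a l k x else 0)"
    unfolding Vx_def Sx_def[symmetric]
    by (rule sum.cong) (auto simp: basisV_def dest: Sx_box)
  also have "\<dots> = (if n \<in> Sx l x then coefC \<omega> a l n x else 0)"
    using finite_Sx by (simp add: sum.delta)
  finally show ?thesis .
qed

lemma opA_eval:
  "opA \<theta>0 h \<omega> a l (Vx \<omega> a l x) m =
     (if m \<in> Sx l x then coefC \<omega> a l m x * theta \<theta>0 h \<omega> (tot m) else 0)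
     + (\<Sum>p\<in>{1..length l}. if m \<in> box l \<and> 1 \<le> m ! (p - 1) \<and> dec m p \<in> Sx l x
          then coefC \<omega> a l (dec m p) x * xi h \<omega> a l m p else 0)"
proof -
  let ?C = "\<lambda>n. coefC \<omega> a l n x"
  let ?S = "Sx l x"
  have "opA \<theta>0 h \<omega> a l (Vx \<omega> a l x) m
      = (\<Sum>n\<in>box l. if n \<in> ?S then ?C n * A_basis \<theta>0 h \<omega> a l n m else 0)"
    unfolding opA_def Vx_eval by (rule sum.cong) auto
  also have "\<dots> = (\<Sum>n\<in>?S. ?C n * A_basis \<theta>0 h \<omega> a l n m)"
  proof -
    have "box l \<inter> ?S = ?S" using Sx_box by blast
    then show ?thesis using sum.inter_restrict[OF finite_box[of l], of "\<lambda>n. coefC \<omega> a l n x * A_basis \<theta>0 h \<omega> a l n m" ?S] by simp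
  qed
  also have "\<dots> = (\<Sum>n\<in>?S. ?C n * theta \<theta>0 h \<omega> (tot n) * basisV l n m)
      + (\<Sum>p\<in>{1..length l}. \<Sum>n\<in>?S. ?C n * xi h \<omega> a l (unitadd n p) p * basisV l (unitadd n p) m)"
    unfolding A_basis_def
    by (simp add: distrib_left sum.distrib sum_distrib_left mult.assoc) (rule sum.swap)
  also have "(\<Sum>n\<in>?S. ?C n * theta \<theta>0 h \<omega> (tot n) * basisV l n m)
     = (\<Sum>n\<in>?S. if m = n then ?C m * theta \<theta>0 h \<omega> (tot m) else 0)"
    by (rule sum.cong) (auto simp: basisV_def dest: Sx_box)
  also have "\<dots> = (if m \<in> ?S then ?C m * theta \<theta>0 h \<omega> (tot m) else 0)"
    using finite_Sx by (simp add: sum.delta)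
  also have "(\<Sum>p\<in>{1..length l}. \<Sum>n\<in>?S. ?C n * xi h \<omega> a l (unitadd n p) p * basisV l (unitadd n p) m)
    = (\<Sum>p\<in>{1..length l}. if m \<in> box l \<and> 1 \<le> m ! (p - 1) \<and> dec m p \<in> ?S
          then ?C (dec m p) * xi h \<omega> a l m p else 0)"
  proof (rule sum.cong[OF refl])
    fix p assume p: "p \<in> {1..length l}"
    show "(\<Sum>n\<in>?S. ?C n * xi h \<omega> a l (unitadd n p) p * basisV l (unitadd n p) m)
      = (if m \<in> box l \<and> 1 \<le> m ! (p - 1) \<and> dec m p \<in> ?S then ?C (dec m p) * xi h \<omega> a l m p else 0)"
    proof (cases "m \<in> box l")
      case False
      then show ?thesis by (auto simp: basisV_def intro!: sum.neutral)
    next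
      case True
      then have lm: "length m = length l" by (simp add: box_def)
      have "(\<Sum>n\<in>?S. ?C n * xi h \<omega> a l (unitadd n p) p * basisV l (unitadd n p) m)
        = (\<Sum>n\<in>?S. if dec m p = n then (if 1 \<le> m ! (p - 1) then ?C (dec m p) * xi h \<omega> a l m p else 0) else 0)"
      proof (rule sum.cong[OF refl])
        fix n assume n: "n \<in> ?S"
        then have ln: "length n = length m" using lm by (simp add: Sx_def box_def)
        have iff: "(unitadd n p = m) \<longleftrightarrow> (n = dec m p \<and> 1 \<le> m ! (p - 1))"
          using unitadd_eq_iff[of p m n] p lm ln by auto
        show "?C n * xi h \<omega> a l (unitadd n p) p * basisV l (unitadd n p) m
          = (if dec m p = n then (if 1 \<le> m ! (p - 1) then ?C (dec m p) * xi h \<omega> a l m p else 0) else 0)"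
          using iff True by (auto simp: basisV_def)
      qed
      also have "\<dots> = (if m \<in> box l \<and> 1 \<le> m ! (p - 1) \<and> dec m p \<in> ?S then ?C (dec m p) * xi h \<omega> a l m p else 0)"
        using finite_Sx True by (simp add: sum.delta)
      finally show ?thesis .
    qed
  qed
  finally show ?thesis .
qed


definition Bq :: "complex \<Rightarrow> complex list \<Rightarrow> nat list \<Rightarrow> nat list \<Rightarrow> nat list \<Rightarrow> nat \<Rightarrow> complex" where
  "Bq \<omega> a l x m q = of_nat (tsum m 1 (q - 1)) + of_nat (tsum x 1 q) + of_nat (tsum l q (length l)) + a ! (q - 1) + \<omega> + 1"

definition Pj :: "complex \<Rightarrow> complex list \<Rightarrow> nat list \<Rightarrow> nat list \<Rightarrow> nat list \<Rightarrow> nat \<Rightarrow> complex" where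
  "Pj \<omega> a l x m j = (\<Prod>q\<in>{1..length l}. of_nat (m ! (q - 1) choose x ! (q - 1)) *
     (if q \<le> j then pochhammer (Bq \<omega> a l x m q) (m ! (q - 1) - x ! (q - 1))
      else pochhammer (Bq \<omega> a l x m q - 1) (m ! (q - 1) - x ! (q - 1))))"

definition Rp :: "complex \<Rightarrow> complex list \<Rightarrow> nat list \<Rightarrow> nat list \<Rightarrow> nat list \<Rightarrow> nat \<Rightarrow> complex" where
  "Rp \<omega> a l x m p = (\<Prod>q\<in>{1..length l} - {p}. of_nat (m ! (q - 1) choose x ! (q - 1)) *
     (if q < p then pochhammer (Bq \<omega> a l x m q) (m ! (q - 1) - x ! (q - 1))
      else pochhammer (Bq \<omega> a l x m q - 1) (m ! (q - 1) - x ! (q - 1))))"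

definition sk :: "complex \<Rightarrow> nat list \<Rightarrow> nat \<Rightarrow> complex" where
  "sk \<omega> x k = (-1) ^ k / pochhammer (2 * of_nat (tot x) + \<omega> + 1) k"

definition Dj :: "nat list \<Rightarrow> nat list \<Rightarrow> nat \<Rightarrow> complex" where
  "Dj x m j = of_nat (tsum m 1 j) - of_nat (tsum x 1 j)"

lemma Pj_split:
  assumes p: "p \<in> {1..length l}"
  shows "Pj \<omega> a l x m p = of_nat (m ! (p - 1) choose x ! (p - 1))
          * pochhammer (Bq \<omega> a l x m p) (m ! (p - 1) - x ! (p - 1)) * Rp \<omega> a l x m p"
    and "Pj \<omega> a l x m (p - 1) = of_nat (m ! (p - 1) choose x ! (p - 1))
          * pochhammer (Bq \<omega> a l x m p - 1) (m ! (p - 1) - x ! (p - 1)) * Rp \<omega> a l x m p"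
proof -
  have fin: "finite {1..length l}" by simp
  define g where "g = (\<lambda>j q. of_nat (m ! (q - 1) choose x ! (q - 1)) *
     (if q \<le> j then pochhammer (Bq \<omega> a l x m q) (m ! (q - 1) - x ! (q - 1))
      else pochhammer (Bq \<omega> a l x m q - 1) (m ! (q - 1) - x ! (q - 1))) :: complex)"
  have P: "Pj \<omega> a l x m j = (\<Prod>q\<in>{1..length l}. g j q)" for j unfolding Pj_def g_def by simp
  have A: "(\<Prod>q\<in>{1..length l} - {p}. g p q) = Rp \<omega> a l x m p"
    unfolding Rp_def g_def by (rule prod.cong) auto
  have B: "(\<Prod>q\<in>{1..length l} - {p}. g (p - 1) q) = Rp \<omega> a l x m p"
    unfolding Rp_def g_def using p by (intro prod.cong) auto
  have "Pj \<omega> a l x m p = g p p * Rp \<omega> a l x m p"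
    unfolding P A[symmetric] by (rule prod.remove[OF fin p])
  then show "Pj \<omega> a l x m p = of_nat (m ! (p - 1) choose x ! (p - 1))
          * pochhammer (Bq \<omega> a l x m p) (m ! (p - 1) - x ! (p - 1)) * Rp \<omega> a l x m p"
    by (simp add: g_def)
  have "Pj \<omega> a l x m (p - 1) = g (p - 1) p * Rp \<omega> a l x m p"
    unfolding P B[symmetric] by (rule prod.remove[OF fin p])
  then show "Pj \<omega> a l x m (p - 1) = of_nat (m ! (p - 1) choose x ! (p - 1))
          * pochhammer (Bq \<omega> a l x m p - 1) (m ! (p - 1) - x ! (p - 1)) * Rp \<omega> a l x m p"
  proof -
    have "\<not> p \<le> p - 1" using p by auto
    then show ?thesis using \<open>Pj \<omega> a l x m (p - 1) = g (p - 1) p * Rp \<omega> a l x m p\<close> by (simp add: g_def)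
  qed
qed

lemma coefC_eq: "coefC \<omega> a l m x = sk \<omega> x (tot m - tot x) * Pj \<omega> a l x m (length l)"
  unfolding coefC_def sk_def Pj_def Bq_def
  by (auto intro!: prod.cong)

lemma tot_dec:
  assumes "1 \<le> p" "p \<le> length m" "1 \<le> m ! (p - 1)"
  shows "tot (dec m p) + 1 = tot m"
proof -
  have "(of_nat (tsum (dec m p) 1 (length m)) :: complex) = of_nat (tsum m 1 (length m)) - 1"
    using tsum_dec[OF assms, of "length m"] assms by simp
  then have "(of_nat (tot (dec m p) + 1) :: complex) = of_nat (tot m)"
    by (simp add: tot_def)
  then show ?thesis using of_nat_eq_iff by blast
qed

lemma coefC_dec:
  assumes p: "p \<in> {1..length l}" and m: "m \<in> Sx l x" and lt: "x ! (p - 1) < m ! (p - 1)"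
  shows "coefC \<omega> a l (dec m p) x = sk \<omega> x (tot m - tot x - 1) *
     (of_nat (m ! (p - 1) - 1 choose x ! (p - 1)) * pochhammer (Bq \<omega> a l x m p) (m ! (p - 1) - x ! (p - 1) - 1)
      * Rp \<omega> a l x m p)"
proof -
  have lm: "length m = length l" using m by (simp add: Sx_def box_def)
  have p1: "1 \<le> p" "p \<le> length m" "1 \<le> m ! (p - 1)" using p lm lt by auto
  have td: "tot (dec m p) + 1 = tot m" by (rule tot_dec[OF p1])
  have fin: "finite {1..length l}" by simp
  let ?f = "\<lambda>n q. of_nat ((n ! (q - 1)) choose (x ! (q - 1)))
         * pochhammer (of_nat (tsum n 1 (q - 1)) + of_nat (tsum x 1 q)
              + of_nat (tsum l q (length l)) + a ! (q - 1) + \<omega> + 1)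
             (n ! (q - 1) - x ! (q - 1)) :: complex"
  have "(\<Prod>q\<in>{1..length l}. ?f (dec m p) q) = ?f (dec m p) p * (\<Prod>q\<in>{1..length l} - {p}. ?f (dec m p) q)"
    by (rule prod.remove[OF fin p])
  also have "?f (dec m p) p = of_nat (m ! (p - 1) - 1 choose x ! (p - 1)) * pochhammer (Bq \<omega> a l x m p) (m ! (p - 1) - x ! (p - 1) - 1)"
    using tsum_dec[OF p1, of "p - 1"] p1 by (simp add: nth_dec Bq_def)
  also have "(\<Prod>q\<in>{1..length l} - {p}. ?f (dec m p) q) = Rp \<omega> a l x m p"
    unfolding Rp_def
  proof (rule prod.cong[OF refl])
    fix q assume q: "q \<in> {1..length l} - {p}"
    have "q - 1 \<noteq> p - 1" using q p by auto
    then show "?f (dec m p) q = of_nat (m ! (q - 1) choose x ! (q - 1)) *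
     (if q < p then pochhammer (Bq \<omega> a l x m q) (m ! (q - 1) - x ! (q - 1))
      else pochhammer (Bq \<omega> a l x m q - 1) (m ! (q - 1) - x ! (q - 1)))"
      using tsum_dec[OF p1, of "q - 1"] p1 q by (auto simp: nth_dec Bq_def add.assoc)
  qed
  finally have pr: "(\<Prod>q\<in>{1..length l}. ?f (dec m p) q) = of_nat (m ! (p - 1) - 1 choose x ! (p - 1)) * pochhammer (Bq \<omega> a l x m p) (m ! (p - 1) - x ! (p - 1) - 1)
      * Rp \<omega> a l x m p" by (simp add: mult.assoc)
  have "tot (dec m p) - tot x = tot m - tot x - 1" using td by simp
  then show ?thesis unfolding coefC_def sk_def using pr by (simp add: mult.assoc)
qed


lemma scalar_id:
  fixes M X L \<alpha> B :: complex and mp xp :: nat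
  assumes "xp < mp" and B: "B = M + (X + of_nat xp) + L + \<alpha> + 1"
  shows "of_nat (mp - 1 choose xp) * pochhammer B (mp - xp - 1) * of_nat mp * ((M + (M + of_nat mp)) + L + \<alpha>)
     = ((M + of_nat mp) - (X + of_nat xp)) * (of_nat (mp choose xp) * pochhammer B (mp - xp))
       - (M - X) * (of_nat (mp choose xp) * pochhammer (B - 1) (mp - xp))"
proof -
  obtain d where d: "mp - xp = Suc d" using assms(1) by (metis Suc_diff_Suc)
  have mp: "mp = xp + Suc d" using d assms(1) by simp
  have bin: "(of_nat (mp - 1 choose xp) :: complex) * of_nat mp = of_nat (Suc d) * of_nat (mp choose xp)"
  proof -
    have e: "(mp - xp) * (mp choose xp) = mp * ((mp - 1) choose xp)" by (rule binomial_absorb_comp)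
    have e2: "(of_nat (mp - xp) :: complex) * of_nat (mp choose xp) = of_nat mp * of_nat ((mp - 1) choose xp)"
      by (metis e of_nat_mult)
    show ?thesis using e2[unfolded d] by (metis mult.commute)
  qed
  have p1: "pochhammer B (mp - xp) = pochhammer B d * (B + of_nat d)"
    using d by (simp add: pochhammer_rec' mult.commute)
  have p2: "pochhammer (B - 1) (mp - xp) = (B - 1) * pochhammer B d"
    using d by (simp add: pochhammer_rec)
  have p3: "mp - xp - 1 = d" using d by simp
  define c where "c = (of_nat (mp choose xp) :: complex)"
  define Q where "Q = pochhammer B d"
  have "of_nat (mp - 1 choose xp) * pochhammer B (mp - xp - 1) * of_nat mp * ((M + (M + of_nat mp)) + L + \<alpha>)
      = (of_nat (mp - 1 choose xp) * of_nat mp) * Q * ((M + (M + of_nat mp)) + L + \<alpha>)"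
    unfolding Q_def p3 by (simp only: mult_ac)
  also have "\<dots> = of_nat (Suc d) * c * Q * ((M + (M + of_nat mp)) + L + \<alpha>)"
    unfolding c_def bin by (rule refl)
  also have "\<dots> = ((M + of_nat mp) - (X + of_nat xp)) * (c * (Q * (B + of_nat d)))
       - (M - X) * (c * ((B - 1) * Q))"
    unfolding B mp by (simp add: algebra_simps)
  finally show ?thesis using p1 p2 unfolding c_def Q_def by simp
qed

lemma telescope:
  fixes F :: "nat \<Rightarrow> complex"
  shows "(\<Sum>p\<in>{1..n}. F p - F (p - 1)) = F n - F 0"
  by (induction n) (auto simp: sum.cl_ivl_Suc)

lemma dec_in_Sx:
  assumes m: "m \<in> Sx l x" and p: "p \<in> {1..length l}" and lt: "x ! (p - 1) < m ! (p - 1)"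
  shows "dec m p \<in> Sx l x"
proof -
  have lm: "length m = length l" using m by (simp add: Sx_def box_def)
  have p1: "1 \<le> p" "p \<le> length m" using p lm by auto
  show ?thesis using m lt p1 unfolding Sx_def box_def
    by (auto simp: nth_dec[OF p1] lm)
qed

lemma Sx_of_dec:
  assumes m: "m \<in> box l" and d: "dec m p \<in> Sx l x" and p: "p \<in> {1..length l}"
  shows "m \<in> Sx l x"
proof -
  have lm: "length m = length l" using m by (simp add: box_def)
  have p1: "1 \<le> p" "p \<le> length m" using p lm by auto
  show ?thesis using m d unfolding Sx_def
    by (auto simp: nth_dec[OF p1] lm split: if_splits)
qed

lemma tot_bounds:
  assumes m: "m \<in> Sx l x" and x: "x \<in> box l" and p: "p \<in> {1..length l}" and lt: "x ! (p - 1) < m ! (p - 1)"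
  shows "tot x + 1 \<le> tot m" "tot m \<le> tot l"
proof -
  have lm: "length m = length l" using m by (simp add: Sx_def box_def)
  have lx: "length x = length l" using x by (simp add: box_def)
  have p1: "1 \<le> p" "p \<le> length m" "1 \<le> m ! (p - 1)" using p lm lt by auto
  have dS: "dec m p \<in> Sx l x" by (rule dec_in_Sx[OF m p lt])
  have "tsum x 1 (length l) \<le> tsum (dec m p) 1 (length l)"
    by (rule tsum_mono) (use dS in \<open>auto simp: Sx_def\<close>)
  then have "tot x \<le> tot (dec m p)" using lx lm by (simp add: tot_def)
  then show "tot x + 1 \<le> tot m" using tot_dec[OF p1] by simp
  have "tsum m 1 (length l) \<le> tsum l 1 (length l)"
    by (rule tsum_mono) (use m in \<open>auto simp: Sx_def box_def\<close>)
  then show "tot m \<le> tot l" using lm by (simp add: tot_def)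
qed


lemma ring_aux:
  fixes s0 s W c' Q R h E mpc Dp Dm c PB PB1 :: complex
  assumes "s0 = - W * s" and "c' * Q * mpc * E = Dp * (c * PB) - Dm * (c * PB1)"
  shows "s0 * (c' * Q * R) * (h * E * mpc) = - h * W * s * (Dp * (c * PB * R) - Dm * (c * PB1 * R))"
proof -
  have "- h * W * s * (Dp * (c * PB * R) - Dm * (c * PB1 * R)) = - h * W * s * R * (Dp * (c * PB) - Dm * (c * PB1))"
    by (simp add: algebra_simps)
  also have "\<dots> = - h * W * s * R * (c' * Q * mpc * E)" using assms(2) by simp
  also have "\<dots> = s0 * (c' * Q * R) * (h * E * mpc)" using assms(1) by (simp add: algebra_simps)
  finally show ?thesis by simp
qed

lemma sk_step:
  assumes "2 * of_nat (tot x) + \<omega> + 1 + of_nat k = W" "W \<noteq> 0"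
  shows "sk \<omega> x k = - W * sk \<omega> x (Suc k)"
proof -
  let ?P = "pochhammer (2 * of_nat (tot x) + \<omega> + 1) k :: complex"
  have e: "sk \<omega> x (Suc k) = (-1) ^ Suc k / (W * ?P)"
    unfolding sk_def pochhammer_rec' using assms(1) by (simp add: add.assoc)
  show ?thesis
  proof (cases "?P = 0")
    case True then show ?thesis using e by (simp add: sk_def)
  next
    case False then show ?thesis using e assms(2) by (simp add: sk_def field_simps)
  qed
qed

lemma Tp_eq:
  assumes x: "x \<in> box l" and m: "m \<in> Sx l x" and p: "p \<in> {1..length l}"
    and nz: "x ! (p - 1) < m ! (p - 1) \<Longrightarrow> of_nat (tot x) + of_nat (tot m) + \<omega> \<noteq> (0::complex)"
  shows "(if m \<in> box l \<and> 1 \<le> m ! (p - 1) \<and> dec m p \<in> Sx l x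
          then coefC \<omega> a l (dec m p) x * xi h \<omega> a l m p else 0)
    = - h * (of_nat (tot x) + of_nat (tot m) + \<omega>) * sk \<omega> x (tot m - tot x)
        * (Dj x m p * Pj \<omega> a l x m p - Dj x m (p - 1) * Pj \<omega> a l x m (p - 1))"
proof -
  have lm: "length m = length l" using m by (simp add: Sx_def box_def)
  have lx: "length x = length l" using x by (simp add: box_def)
  have p1: "1 \<le> p" "p \<le> length m" using p lm by auto
  have le: "x ! (p - 1) \<le> m ! (p - 1)" using m p lm by (auto simp: Sx_def)
  define M where "M = (of_nat (tsum m 1 (p - 1)) :: complex)"
  define X where "X = (of_nat (tsum x 1 (p - 1)) :: complex)"
  define L where "L = (of_nat (tsum l p (length l)) :: complex)"
  define \<alpha> where "\<alpha> = a ! (p - 1) + \<omega>"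
  define mp where "mp = m ! (p - 1)"
  define xp where "xp = x ! (p - 1)"
  have tm: "tsum m 1 p = tsum m 1 (p - 1) + mp" using tsum_prev[OF p1(1), of m] by (simp add: mp_def)
  have tx: "tsum x 1 p = tsum x 1 (p - 1) + xp" using tsum_prev[OF p1(1), of x] by (simp add: xp_def)
  have Dp: "Dj x m p = (M + of_nat mp) - (X + of_nat xp)" unfolding Dj_def tm tx M_def X_def by simp
  have Dm: "Dj x m (p - 1) = M - X" unfolding Dj_def M_def X_def by simp
  have B: "Bq \<omega> a l x m p = M + (X + of_nat xp) + L + \<alpha> + 1"
    unfolding Bq_def tx M_def X_def L_def \<alpha>_def by (simp add: add.assoc)
  show ?thesis
  proof (cases "xp < mp")
    case True
    have lt: "x ! (p - 1) < m ! (p - 1)" using True by (simp add: xp_def mp_def)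
    have mb: "m \<in> box l" using m by (rule Sx_box)
    have dS: "dec m p \<in> Sx l x" by (rule dec_in_Sx[OF m p lt])
    have tb: "tot x + 1 \<le> tot m" by (rule tot_bounds(1)[OF m x p lt])
    define k where "k = tot m - tot x - 1"
    have k: "tot m - tot x = Suc k" using tb unfolding k_def by simp
    have k2: "tot m - tot x - 1 = k" using k by simp
    define W where "W = of_nat (tot x) + of_nat (tot m) + (\<omega>::complex)"
    have W0: "W \<noteq> 0" using nz[OF lt] by (simp add: W_def)
    have tmk: "tot m = tot x + Suc k" using k tb by arith
    have cW: "2 * of_nat (tot x) + \<omega> + 1 + of_nat k = W" unfolding W_def tmk by simp
    have sks: "sk \<omega> x k = - W * sk \<omega> x (Suc k)" by (rule sk_step[OF cW W0])
    have cd: "coefC \<omega> a l (dec m p) x = sk \<omega> x k *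
       (of_nat (mp - 1 choose xp) * pochhammer (Bq \<omega> a l x m p) (mp - xp - 1) * Rp \<omega> a l x m p)"
      using coefC_dec[OF p m lt, of \<omega> a] unfolding k2 mp_def xp_def .
    have xie: "xi h \<omega> a l m p = h * ((M + (M + of_nat mp)) + L + \<alpha>) * of_nat mp"
      unfolding xi_def tm M_def L_def \<alpha>_def mp_def by (simp add: add.assoc)
    have sc: "of_nat (mp - 1 choose xp) * pochhammer (Bq \<omega> a l x m p) (mp - xp - 1) * of_nat mp * ((M + (M + of_nat mp)) + L + \<alpha>)
     = ((M + of_nat mp) - (X + of_nat xp)) * (of_nat (mp choose xp) * pochhammer (Bq \<omega> a l x m p) (mp - xp))
       - (M - X) * (of_nat (mp choose xp) * pochhammer (Bq \<omega> a l x m p - 1) (mp - xp))"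
      by (rule scalar_id[OF True B])
    have lhs: "(if m \<in> box l \<and> 1 \<le> m ! (p - 1) \<and> dec m p \<in> Sx l x
          then coefC \<omega> a l (dec m p) x * xi h \<omega> a l m p else 0) = coefC \<omega> a l (dec m p) x * xi h \<omega> a l m p"
      using mb dS lt by simp
    show ?thesis
      unfolding lhs
      unfolding cd xie Pj_split[OF p] Dp Dm W_def[symmetric] k
      unfolding mp_def[symmetric] xp_def[symmetric]
      by (rule ring_aux[OF sks sc])
  next
    case False
    then have eq: "mp = xp" using le by (simp add: mp_def xp_def)
    have lhs: "(if m \<in> box l \<and> 1 \<le> m ! (p - 1) \<and> dec m p \<in> Sx l x
          then coefC \<omega> a l (dec m p) x * xi h \<omega> a l m p else 0) = 0"
    proof -
      have "\<not> (1 \<le> m ! (p - 1) \<and> dec m p \<in> Sx l x)"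
      proof
        assume a1: "1 \<le> m ! (p - 1) \<and> dec m p \<in> Sx l x"
        then have "x ! (p - 1) \<le> dec m p ! (p - 1)" using p lm by (auto simp: Sx_def)
        then have "x ! (p - 1) \<le> m ! (p - 1) - 1" using nth_dec[OF p1, of "p - 1"] by simp
        moreover have "1 \<le> m ! (p - 1)" using a1 by simp
        ultimately show False using eq by (simp add: mp_def xp_def)
      qed
      then show ?thesis by auto
    qed
    have "Dj x m p = Dj x m (p - 1)" unfolding Dp Dm eq by simp
    moreover have "Pj \<omega> a l x m p = Pj \<omega> a l x m (p - 1)"
      unfolding Pj_split[OF p] using eq by (simp add: mp_def xp_def)
    ultimately show ?thesis unfolding lhs by simp
  qed
qed

theorem mainTheorem2:
  fixes l x :: "nat list" and \<theta>0 h hs \<omega> \<omega>s :: complex and a :: "complex list"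
  assumes "standing l h hs \<omega> \<omega>s a"
    and "x \<in> box l"
  shows "opA \<theta>0 h \<omega> a l (Vx \<omega> a l x) = (\<lambda>m. theta \<theta>0 h \<omega> (tot x) * Vx \<omega> a l x m)"
proof (rule ext)
  fix m
  have om: "\<omega> \<notin> negrange (2 * int (tot l) - 1)" using assms(1) by (simp add: standing_def)
  have x: "x \<in> box l" by fact
  have lx: "length x = length l" using x by (simp add: box_def)
  show "opA \<theta>0 h \<omega> a l (Vx \<omega> a l x) m = theta \<theta>0 h \<omega> (tot x) * Vx \<omega> a l x m"
  proof (cases "m \<in> Sx l x")
    case False
    have "(\<Sum>p\<in>{1..length l}. if m \<in> box l \<and> 1 \<le> m ! (p - 1) \<and> dec m p \<in> Sx l x
          then coefC \<omega> a l (dec m p) x * xi h \<omega> a l m p else 0) = 0"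
    proof (intro sum.neutral ballI)
      fix p assume p: "p \<in> {1..length l}"
      have "\<not> (m \<in> box l \<and> dec m p \<in> Sx l x)" using False Sx_of_dec[OF _ _ p] by blast
      then show "(if m \<in> box l \<and> 1 \<le> m ! (p - 1) \<and> dec m p \<in> Sx l x
          then coefC \<omega> a l (dec m p) x * xi h \<omega> a l m p else 0) = 0" by auto
    qed
    then show ?thesis unfolding opA_eval Vx_eval using False by simp
  next
    case True
    have lm: "length m = length l" using True by (simp add: Sx_def box_def)
    define W where "W = of_nat (tot x) + of_nat (tot m) + (\<omega>::complex)"
    define s where "s = sk \<omega> x (tot m - tot x)"
    define F where "F = (\<lambda>j. Dj x m j * Pj \<omega> a l x m j)"
    have nz: "of_nat (tot x) + of_nat (tot m) + \<omega> \<noteq> (0::complex)"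
      if p: "p \<in> {1..length l}" and lt: "x ! (p - 1) < m ! (p - 1)" for p
    proof
      assume z: "of_nat (tot x) + of_nat (tot m) + \<omega> = (0::complex)"
      have tb: "tot x + 1 \<le> tot m" "tot m \<le> tot l" using tot_bounds[OF True x p lt] by auto
      have "\<omega> = of_int (- (int (tot x) + int (tot m)))" using z by (simp add: add_eq_0_iff2 algebra_simps)
      then have "\<exists>j. \<omega> = of_int j \<and> - (2 * int (tot l) - 1) \<le> j \<and> j \<le> - 1"
        using tb by (intro exI[of _ "- (int (tot x) + int (tot m))"]) auto
      then have "\<omega> \<in> negrange (2 * int (tot l) - 1)" unfolding negrange_def by blast
      then show False using om by simp
    qed
    have "(\<Sum>p\<in>{1..length l}. if m \<in> box l \<and> 1 \<le> m ! (p - 1) \<and> dec m p \<in> Sx l x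
          then coefC \<omega> a l (dec m p) x * xi h \<omega> a l m p else 0)
        = (\<Sum>p\<in>{1..length l}. - h * W * s * (F p - F (p - 1)))"
      unfolding W_def s_def F_def using Tp_eq[OF x True _ nz] by (intro sum.cong) auto
    also have "\<dots> = - h * W * s * (F (length l) - F 0)"
      by (subst sum_distrib_left[symmetric]) (simp only: telescope)
    also have "F 0 = 0" by (simp add: F_def Dj_def tsum_def)
    also have "F (length l) = (of_nat (tot m) - of_nat (tot x)) * Pj \<omega> a l x m (length l)"
      by (simp add: F_def Dj_def tot_def lm lx)
    finally have S: "(\<Sum>p\<in>{1..length l}. if m \<in> box l \<and> 1 \<le> m ! (p - 1) \<and> dec m p \<in> Sx l x
          then coefC \<omega> a l (dec m p) x * xi h \<omega> a l m p else 0)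
        = - h * W * s * ((of_nat (tot m) - of_nat (tot x)) * Pj \<omega> a l x m (length l))" by simp
    have C: "coefC \<omega> a l m x = s * Pj \<omega> a l x m (length l)" unfolding s_def by (rule coefC_eq)
    have R: "(s * P) * (\<theta>0 + h * tm * (tm + \<omega>)) + (- h * (tx + tm + \<omega>) * s * ((tm - tx) * P))
        = (\<theta>0 + h * tx * (tx + \<omega>)) * (s * P)" for P tm tx :: complex
      by (simp add: algebra_simps)
    show ?thesis unfolding opA_eval Vx_eval S C W_def theta_def using True
      by (simp only: if_True R)
  qed
qed

end
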